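(* Let $g$ be a positive integer and $\Gamma=\langle 2,2g+1\rangle$ (the numerical semigroup generated by $2$ and $2g+1$). For every integer $k\ge0$, \[ \delta^1_\Gamma(2g+2+k)=\delta^2_\Gamma(2g+k). \]
   Context: For a numerical semigroup $\Gamma$: $D_\Gamma(x)=\{s\in\Gamma:x-s\in\Gamma\}$, $\delta^1_\Gamma(m)=\min\{|D_\Gamma(m_1)|: m\le m_1\in\Gamma\}$, and $\delta^2_\Gamma(m)=\min\{|D_\Gamma(m_1)\cup D_\Gamma(m_2)|: m\le m_1<m_2,\ m_1,m_2\in\Gamma\}$. *)

theory Defs
  imports Main
begin

definition semigroup2 :: "nat \<Rightarrow> nat \<Rightarrow> nat set" where
  "semigroup2 a b = {a * i + b * j | i j. True}"

text \<open>D_Gamma(x) = {s in Gamma : x - s in Gamma}; as elements of Gamma are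
  nonnegative, x - s in Gamma forces s <= x, so truncated subtraction is harmless.\<close>
definition Dset :: "nat set \<Rightarrow> nat \<Rightarrow> nat set" where
  "Dset G x = {s \<in> G. s \<le> x \<and> x - s \<in> G}"

definition delta1 :: "nat set \<Rightarrow> nat \<Rightarrow> nat" where
  "delta1 G m = (LEAST n. \<exists>m1. m \<le> m1 \<and> m1 \<in> G \<and> n = card (Dset G m1))"

definition delta2 :: "nat set \<Rightarrow> nat \<Rightarrow> nat" where
  "delta2 G m = (LEAST n. \<exists>m1 m2. m \<le> m1 \<and> m1 < m2 \<and> m1 \<in> G \<and> m2 \<in> G \<and>
                   n = card (Dset G m1 \<union> Dset G m2))"

end

theory Submission
  imports Defs
begin

lemma mem_sg: "x \<in> semigroup2 2 (2*g+1) \<longleftrightarrow> even x \<or> 2*g+1 \<le> x"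
proof
  assume "x \<in> semigroup2 2 (2*g+1)"
  then obtain i j where x: "x = 2*i + (2*g+1)*j" by (auto simp: semigroup2_def)
  show "even x \<or> 2*g+1 \<le> x"
  proof (cases j)
    case 0 then show ?thesis using x by auto
  next
    case (Suc j') then show ?thesis using x by auto
  qed
next
  assume h: "even x \<or> 2*g+1 \<le> x"
  show "x \<in> semigroup2 2 (2*g+1)"
  proof (cases "even x")
    case True
    then have "x = 2*(x div 2) + (2*g+1)*0" by auto
    then show ?thesis unfolding semigroup2_def by blast
  next
    case False
    then have "x = 2*((x - (2*g+1)) div 2) + (2*g+1)*1" using h by presburger
    then show ?thesis unfolding semigroup2_def by blast
  qed
qed

lemma fin_D: "finite (Dset G x)"
  by (rule finite_subset[of _ "{..x}"]) (auto simp: Dset_def)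

theorem lemma5p1:
  fixes g k :: nat
  assumes "g \<ge> 1"
  shows "delta1 (semigroup2 2 (2*g+1)) (2*g+2+k) = delta2 (semigroup2 2 (2*g+1)) (2*g+k)"
proof -
  define G where "G = semigroup2 2 (2*g+1)"
  have memG: "\<And>x. x \<in> G \<longleftrightarrow> even x \<or> 2*g+1 \<le> x" unfolding G_def by (rule mem_sg)
  define m where "m = 2*g+k"
  have big: "\<And>x. 2*g \<le> x \<Longrightarrow> x \<in> G" using memG by presburger
  have p2: "\<And>x. x \<in> G \<Longrightarrow> x + 2 \<in> G" unfolding memG by auto
  have D2: "\<And>x. Dset G x \<subseteq> Dset G (x+2)"
  proof
    fix x s assume "s \<in> Dset G x"
    then have "s \<in> G" "s \<le> x" "x - s \<in> G" by (auto simp: Dset_def)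
    then have "x + 2 - s \<in> G" using p2[of "x-s"] by (metis Nat.add_diff_assoc2)
    then show "s \<in> Dset G (x+2)" using \<open>s \<in> G\<close> \<open>s \<le> x\<close> by (auto simp: Dset_def)
  qed
  have ex1: "\<exists>n m1. m+2 \<le> m1 \<and> m1 \<in> G \<and> n = card (Dset G m1)"
    using big[of "m+2"] m_def by auto
  then obtain y where y: "m+2 \<le> y" "y \<in> G" "delta1 G (m+2) = card (Dset G y)"
    using LeastI_ex[OF ex1] unfolding delta1_def by blast
  have ex2: "\<exists>n m1 m2. m \<le> m1 \<and> m1 < m2 \<and> m1 \<in> G \<and> m2 \<in> G \<and>
                   n = card (Dset G m1 \<union> Dset G m2)"
    using big[of m] big[of "m+1"] m_def by auto
  then obtain m1 m2 where mm: "m \<le> m1" "m1 < m2" "m1 \<in> G" "m2 \<in> G"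
     "delta2 G m = card (Dset G m1 \<union> Dset G m2)"
    using LeastI_ex[OF ex2] unfolding delta2_def by blast
  have le1: "delta1 G (m+2) \<le> card (Dset G z)" if "m+2 \<le> z" "z \<in> G" for z
    unfolding delta1_def by (rule Least_le) (use that in blast)
  have A: "delta2 G m \<le> delta1 G (m+2)"
  proof -
    have y2: "y - 2 \<in> G" using big y(1) m_def by auto
    have "Dset G (y-2) \<union> Dset G y = Dset G y" proof -
      have "y - 2 + 2 = y" using y(1) by simp
      then show ?thesis using D2[of "y-2"] by (metis Un_absorb1)
    qed
    have "delta2 G m \<le> card (Dset G (y-2) \<union> Dset G y)"
      unfolding delta2_def
      by (rule Least_le, rule exI[of _ "y-2"], rule exI[of _ y]) (use y y2 in auto)
    then show ?thesis using y \<open>Dset G (y-2) \<union> Dset G y = Dset G y\<close> by simp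
  qed
  have B: "delta1 G (m+2) \<le> delta2 G m"
  proof (cases "m+2 \<le> m2")
    case True
    have "card (Dset G m2) \<le> card (Dset G m1 \<union> Dset G m2)"
      by (rule card_mono) (auto simp: fin_D)
    then show ?thesis using le1[OF True mm(4)] mm(5) by simp
  next
    case False
    then have e: "m1 = m" "m2 = m+1" using mm by auto
    define U where "U = Dset G m \<union> Dset G (m+1)"
    have fU: "finite U" unfolding U_def by (auto simp: fin_D)
    have inU: "m+1 \<in> U" unfolding U_def Dset_def using big[of "m+1"] memG[of 0] m_def by auto
    have notU: "m+2 \<notin> U" unfolding U_def Dset_def by auto
    have sub: "Dset G (m+2) \<subseteq> (U - {m+1}) \<union> {m+2}"
    proof
      fix s assume s: "s \<in> Dset G (m+2)"
      show "s \<in> (U - {m+1}) \<union> {m+2}"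
      proof (cases "s = m+2")
        case True then show ?thesis by auto
      next
        case False
        from s have sG: "s \<in> G" "s \<le> m+2" "m+2-s \<in> G" by (auto simp: Dset_def)
        have n1: "(1::nat) \<notin> G" using memG assms by simp
        have "s \<noteq> m+1"
        proof
          assume "s = m+1"
          then have "m+2-s = 1" by simp
          with sG(3) n1 show False by simp
        qed
        moreover have "s \<le> m" using sG False \<open>s \<noteq> m+1\<close> by auto
        moreover have "s \<in> U"
        proof (cases "even (m+2-s)")
          case True
          then have "even (m - s)" using \<open>s \<le> m\<close> by (simp add: Nat.add_diff_assoc2)
          then have "m - s \<in> G" using memG by blast
          then show ?thesis unfolding U_def Dset_def using sG \<open>s \<le> m\<close> by auto
        next
          case False
          then have "2*g+1 \<le> m+2-s" using memG sG(3) by blast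
          then have "even (m+1-s)" using False \<open>s \<le> m\<close> by presburger
          then have "m + 1 - s \<in> G" using memG by blast
          then show ?thesis unfolding U_def Dset_def using sG \<open>s \<le> m\<close> by auto
        qed
        ultimately show ?thesis by auto
      qed
    qed
    have "card (Dset G (m+2)) \<le> card ((U - {m+1}) \<union> {m+2})"
      by (rule card_mono) (use fU sub in auto)
    also have "\<dots> = card U" using fU inU notU
      by (simp add: card_insert_if) (metis card_0_eq empty_iff Suc_pred neq0_conv)
    finally have "card (Dset G (m+2)) \<le> card U" .
    then show ?thesis using le1[of "m+2"] big[of "m+2"] m_def mm(5) e U_def by simp
  qed
  show ?thesis using A B unfolding G_def[symmetric] m_def
    by (simp add: add.commute add.left_commute)
qed

end
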